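(* Let $p>1$, $\beta=1/(p-1)$, $\gamma=\frac{p-2}{2(p-1)}$, and let $\phi$ be a global solution on $[0,\infty)$ of $\phi''=\tfrac12 y\phi'-\gamma\phi-|\phi'|^p$, $\phi(0)=0$, $\phi'(0)=\alpha>0$, with $\phi,\phi'>0$ on $(0,\infty)$ and such that, for some $\bar R>0$, $\phi''<0$ on $[0,\bar R)$ and $\phi''>0$ on $(\bar R,\infty)$. Let $y_0>0$ be such that $\phi,\phi',\phi''>0$ on $[y_0,\infty)$. Then: (i) there exists $C>0$ such that $\phi'(y)\le Cy^\beta$ for all $y\ge y_0$; (ii) the function $Z(y)=y^{-1}(\phi'(y))^{p-1}$ satisfies $\liminf_{y\to\infty}Z(y)\ge\frac12\min(1,\beta)$; in particular there exists $C_1>0$ such that $\phi'(y)\ge C_1y^\beta$ for all $y\ge1$. *)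

theory Defs
  imports "HOL-Analysis.Analysis"
begin

end

theory Submission imports Defs begin

lemma nodown:
  fixes f f' :: "real \<Rightarrow> real"
  assumes ab: "a \<le> b"
    and d: "\<And>s. a \<le> s \<Longrightarrow> s \<le> b \<Longrightarrow> DERIV f s :> f' s"
    and pos: "\<And>s. a \<le> s \<Longrightarrow> s \<le> b \<Longrightarrow> f s < 0 \<Longrightarrow> f' s > 0"
    and fa: "f a \<ge> 0"
  shows "f b \<ge> 0"
proof -
  have "continuous_on {a..b} f"
    using d by (meson DERIV_isCont atLeastAtMost_iff continuous_at_imp_continuous_on)
  then obtain m where m: "m \<in> {a..b}" "\<And>t. t \<in> {a..b} \<Longrightarrow> f m \<le> f t"
    using continuous_attains_inf[of "{a..b}" f] ab by auto
  have "f m \<ge> 0"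
  proof (rule ccontr)
    assume neg: "\<not> f m \<ge> 0"
    then have "m \<noteq> a" using fa by auto
    with m have am: "a < m" by auto
    have "f' m > 0" using pos m neg by auto
    then obtain e where e: "e > 0" "\<And>h. h > 0 \<Longrightarrow> h < e \<Longrightarrow> f (m - h) < f m"
      using DERIV_pos_inc_left[OF d] m by (meson atLeastAtMost_iff)
    define h where "h = min (e/2) (m - a)"
    have "h > 0" "h < e" using e am by (auto simp: h_def)
    hence "f (m - h) < f m" using e by auto
    moreover have "m - h \<in> {a..b}" using m am \<open>h>0\<close> by (auto simp: h_def)
    ultimately show False using m(2) by fastforce
  qed
  then show ?thesis using m(2)[of b] ab by (meson atLeastAtMost_iff order_refl order_trans)
qed

theorem lemma7p3:
  fixes p \<alpha> R y\<^sub>0 :: real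
    and \<phi> \<phi>' \<phi>'' :: "real \<Rightarrow> real"
  assumes p: "p > 1"
    and d1: "\<And>y. y \<ge> 0 \<Longrightarrow> (\<phi> has_real_derivative \<phi>' y) (at y within {0..})"
    and d2: "\<And>y. y \<ge> 0 \<Longrightarrow> (\<phi>' has_real_derivative \<phi>'' y) (at y within {0..})"
    and ode: "\<And>y. y \<ge> 0 \<Longrightarrow>
       \<phi>'' y = y / 2 * \<phi>' y - ((p - 2) / (2 * (p - 1))) * \<phi> y - \<bar>\<phi>' y\<bar> powr p"
    and init0: "\<phi> 0 = 0"
    and init1: "\<phi>' 0 = \<alpha>"
    and \<alpha>pos: "\<alpha> > 0"
    and pos: "\<And>y. y > 0 \<Longrightarrow> \<phi> y > 0 \<and> \<phi>' y > 0"
    and Rpos: "R > 0"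
    and conc: "\<And>y. 0 \<le> y \<Longrightarrow> y < R \<Longrightarrow> \<phi>'' y < 0"
    and conv: "\<And>y. y > R \<Longrightarrow> \<phi>'' y > 0"
    and y0pos: "y\<^sub>0 > 0"
    and y0: "\<And>y. y \<ge> y\<^sub>0 \<Longrightarrow> \<phi> y > 0 \<and> \<phi>' y > 0 \<and> \<phi>'' y > 0"
  shows "(\<exists>C>0. \<forall>y\<ge>y\<^sub>0. \<phi>' y \<le> C * y powr (1 / (p - 1)))
    \<and> Liminf at_top (\<lambda>y. ereal ((\<phi>' y) powr (p - 1) / y)) \<ge> ereal (min 1 (1 / (p - 1)) / 2)
    \<and> (\<exists>C\<^sub>1>0. \<forall>y\<ge>1. \<phi>' y \<ge> C\<^sub>1 * y powr (1 / (p - 1)))"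
proof -
  define \<gamma> where "\<gamma> = (p - 2) / (2 * (p - 1))"
  define gp where "gp = max \<gamma> 0"
  define c where "c = min 1 (1 / (p - 1)) / 2"
  define \<beta> where "\<beta> = 1 / (p - 1)"
  have cgp: "c = 1/2 - gp"
  proof (cases "p \<ge> 2")
    case True
    then have "\<gamma> \<ge> 0" using p by (simp add: \<gamma>_def)
    moreover have "1 / (p - 1) \<le> 1" using True by simp
    ultimately show ?thesis using p by (simp add: c_def gp_def \<gamma>_def min_def field_simps)
  next
    case False
    then have "\<gamma> < 0" using p by (simp add: \<gamma>_def divide_neg_pos)
    moreover have "1 / (p - 1) > 1" using False p by simp
    ultimately show ?thesis using p by (simp add: c_def gp_def min_def)
  qed
  have cpos: "c > 0" using p by (simp add: c_def)
  have D1: "DERIV \<phi> y :> \<phi>' y" if "y > 0" for y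
  proof -
    have "at y within {0..} = at y" by (rule at_within_interior) (use that in simp)
    then show ?thesis using d1[of y] that by simp
  qed
  have D2: "DERIV \<phi>' y :> \<phi>'' y" if "y > 0" for y
  proof -
    have "at y within {0..} = at y" by (rule at_within_interior) (use that in simp)
    then show ?thesis using d2[of y] that by simp
  qed
  have mono: "\<phi>' s \<le> \<phi>' t" if "y\<^sub>0 \<le> s" "s \<le> t" for s t
  proof (rule DERIV_nonneg_imp_nondecreasing[OF that(2)])
    fix x assume x: "s \<le> x" "x \<le> t"
    then have "DERIV \<phi>' x :> \<phi>'' x" "\<phi>'' x > 0" using D2[of x] y0[of x] y0pos that by auto
    then show "\<exists>y. DERIV \<phi>' x :> y \<and> y \<ge> 0" by (auto intro: less_imp_le)
  qed
  define u0 where "u0 = \<phi>' y\<^sub>0"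
  have u0pos: "u0 > 0" using y0[of y\<^sub>0] by (simp add: u0_def)
  have uge: "\<phi>' t \<ge> u0" if "t \<ge> y\<^sub>0" for t using mono[of y\<^sub>0 t] that by (simp add: u0_def)
  have phib: "\<phi> t \<le> \<phi> y\<^sub>0 + t * \<phi>' t" if "t \<ge> y\<^sub>0" for t
  proof -
    have "\<phi> t - t * \<phi>' t \<le> \<phi> y\<^sub>0 - y\<^sub>0 * \<phi>' t"
    proof (rule DERIV_nonpos_imp_nonincreasing[OF that, of "\<lambda>s. \<phi> s - s * \<phi>' t"])
      fix x assume x: "y\<^sub>0 \<le> x" "x \<le> t"
      have "DERIV (\<lambda>s. \<phi> s - s * \<phi>' t) x :> \<phi>' x - \<phi>' t"
        using D1[of x] x y0pos by (auto intro!: derivative_eq_intros)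
      then show "\<exists>y. DERIV (\<lambda>s. \<phi> s - s * \<phi>' t) x :> y \<and> y \<le> 0"
        using mono[OF x] by auto
    qed
    moreover have "y\<^sub>0 * \<phi>' t \<ge> 0" using y0pos uge[OF that] u0pos by simp
    ultimately show ?thesis by linarith
  qed
  have pw: "x powr p = x * x powr (p - 1)" if "x > 0" for x
    using powr_add[of x 1 "p - 1"] that by simp
  have part1: "\<exists>C>0. \<forall>y\<ge>y\<^sub>0. \<phi>' y \<le> C * y powr (1 / (p - 1))"
  proof -
    define M where "M = 1/2 + \<bar>\<gamma>\<bar> + \<bar>\<gamma>\<bar> * \<phi> y\<^sub>0 / (u0 * y\<^sub>0)"
    have "\<bar>\<gamma>\<bar> * \<phi> y\<^sub>0 / (u0 * y\<^sub>0) \<ge> 0" using u0pos y0pos y0[of y\<^sub>0] by simp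
    hence Mpos: "M > 0" by (simp add: M_def)
    have "\<phi>' y \<le> M powr (1 / (p - 1)) * y powr (1 / (p - 1))" if y: "y \<ge> y\<^sub>0" for y
    proof -
      define x where "x = \<phi>' y"
      define v where "v = x powr (p - 1)"
      have xpos: "x > 0" and phipos: "\<phi> y > 0" and dd: "\<phi>'' y > 0" using y0[OF y] by (auto simp: x_def)
      have xu: "x \<ge> u0" using uge[OF y] by (simp add: x_def)
      have "0 < y / 2 * x - \<gamma> * \<phi> y - x powr p"
        using dd ode[of y] y y0pos xpos by (simp add: x_def \<gamma>_def)
      hence A1: "x * v < y / 2 * x - \<gamma> * \<phi> y" using pw[OF xpos] by (simp add: v_def)
      have A2: "- \<gamma> * \<phi> y \<le> \<bar>\<gamma>\<bar> * \<phi> y" using phipos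
        by (metis abs_ge_minus_self mult_minus_left mult_right_mono less_imp_le)
      have A3: "\<bar>\<gamma>\<bar> * \<phi> y \<le> \<bar>\<gamma>\<bar> * (\<phi> y\<^sub>0 + y * x)"
        using phib[OF y] by (intro mult_left_mono) (auto simp: x_def)
      have A: "x * v < y / 2 * x + \<bar>\<gamma>\<bar> * \<phi> y\<^sub>0 + \<bar>\<gamma>\<bar> * y * x"
        using A1 A2 A3 by (simp add: algebra_simps)
      have "\<bar>\<gamma>\<bar> * \<phi> y\<^sub>0 \<le> x * (y * (\<bar>\<gamma>\<bar> * \<phi> y\<^sub>0 / (u0 * y\<^sub>0)))"
      proof -
        have "u0 * y\<^sub>0 \<le> x * y" using xu y u0pos y0pos by (intro mult_mono) auto
        then have "x * y / (u0 * y\<^sub>0) \<ge> 1" using u0pos y0pos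
          by (subst le_divide_eq_1_pos) auto
        then have "\<bar>\<gamma>\<bar> * \<phi> y\<^sub>0 * 1 \<le> \<bar>\<gamma>\<bar> * \<phi> y\<^sub>0 * (x * y / (u0 * y\<^sub>0))"
          using y0[of y\<^sub>0] by (intro mult_left_mono) auto
        then show ?thesis by (simp add: field_simps)
      qed
      with A have "x * v < x * (M * y)" by (simp add: M_def algebra_simps)
      hence vM: "v \<le> M * y" using xpos by simp
      have "x = v powr (1 / (p - 1))" using xpos p by (simp add: v_def powr_powr)
      also have "\<dots> \<le> (M * y) powr (1 / (p - 1))" using vM p xpos
        by (intro powr_mono2) (auto simp: v_def)
      also have "\<dots> = M powr (1 / (p - 1)) * y powr (1 / (p - 1))"
        using Mpos y y0pos by (simp add: powr_mult)
      finally show ?thesis by (simp add: x_def)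
    qed
    then show ?thesis using Mpos by (intro exI[of _ "M powr (1 / (p - 1))"]) auto
  qed
  define K where "K = gp * \<phi> y\<^sub>0"
  have Kge: "K \<ge> 0" using y0[of y\<^sub>0] by (simp add: K_def gp_def)
  define v0 where "v0 = u0 powr (p - 1)"
  have v0pos: "v0 > 0" using u0pos by (simp add: v0_def)
  have KEY: "eventually (\<lambda>y. b < \<phi>' y powr (p - 1) / y) at_top" if bc: "b < c" for b
  proof (cases "b < 0")
    case True
    have "eventually (\<lambda>y::real. y > 0) at_top" by (rule eventually_gt_at_top)
    then show ?thesis
    proof eventually_elim
      case (elim y)
      then have "\<phi>' y > 0" using pos by blast
      then have "\<phi>' y powr (p - 1) / y > 0" using elim by simp
      then show ?case using True by linarith
    qed
  next
    case False
    define a where "a = (b + c) / 2"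
    define \<epsilon> where "\<epsilon> = c - a"
    have apos: "a > 0" "a > b" and epos: "\<epsilon> > 0" using False bc cpos by (auto simp: a_def \<epsilon>_def)
    define W where "W = (\<lambda>s. \<phi>' s powr (p - 1) - a * s)"
    define W' where "W' = (\<lambda>s. (p - 1) * \<phi>' s powr (p - 1 - of_nat 1) * \<phi>'' s - a)"
    have DW: "DERIV W s :> W' s" if "s > 0" for s
    proof -
      have h1: "DERIV (\<lambda>s. \<phi>' s powr (p - 1)) s :> (p - 1) * \<phi>' s powr (p - 1 - of_nat 1) * \<phi>'' s"
        by (rule DERIV_fun_powr[OF D2[OF that]]) (use pos that in auto)
      have h2: "DERIV (\<lambda>s. a * s) s :> a" by (auto intro!: derivative_eq_intros)
      show ?thesis using DERIV_diff[OF h1 h2] by (simp add: W_def W'_def)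
    qed
    define Y where "Y = max y\<^sub>0 1 + ((a + 1) / ((p - 1) * v0) + K / u0) / \<epsilon>"
    have Yge: "Y \<ge> y\<^sub>0" "Y \<ge> 1"
    proof -
      have "((a + 1) / ((p - 1) * v0) + K / u0) / \<epsilon> \<ge> 0"
        using apos p v0pos Kge u0pos epos by auto
      then show "Y \<ge> y\<^sub>0" "Y \<ge> 1" by (auto simp: Y_def)
    qed
    have W'ge: "W' s \<ge> 1" if s: "s \<ge> Y" and Wn: "W s < 0" for s
    proof -
      have sy0: "s \<ge> y\<^sub>0" and s0: "s > 0" using Yge s y0pos by auto
      define x where "x = \<phi>' s"
      define v where "v = x powr (p - 1)"
      have xpos: "x > 0" and phipos: "\<phi> s > 0" using y0[OF sy0] by (auto simp: x_def)
      have xu: "x \<ge> u0" using uge[OF sy0] by (simp add: x_def)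
      have vas: "v < a * s" using Wn by (simp add: W_def v_def x_def)
      have vv0: "v \<ge> v0" unfolding v_def v0_def using xu u0pos p by (intro powr_mono2) auto
      have E: "\<phi>'' s = s / 2 * x - \<gamma> * \<phi> s - x * v"
        using ode[of s] s0 xpos pw[OF xpos] by (simp add: x_def v_def \<gamma>_def)
      have B1: "\<gamma> * \<phi> s \<le> gp * \<phi> s" using phipos by (intro mult_right_mono) (auto simp: gp_def)
      have B2: "gp * \<phi> s \<le> gp * (\<phi> y\<^sub>0 + s * x)"
        using phib[OF sy0] by (intro mult_left_mono) (auto simp: x_def gp_def)
      have B3: "x * v \<le> x * (a * s)" using vas xpos by simp
      have F0: "s * x * \<epsilon> - K = s / 2 * x - gp * (\<phi> y\<^sub>0 + s * x) - x * (a * s)"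
        by (simp add: \<epsilon>_def K_def cgp algebra_simps)
      have F: "\<phi>'' s \<ge> s * x * \<epsilon> - K"
        using E B1 B2 B3 F0 by linarith
      have T: "s * \<epsilon> - K / u0 \<ge> (a + 1) / ((p - 1) * v0)"
      proof -
        have "s \<ge> ((a + 1) / ((p - 1) * v0) + K / u0) / \<epsilon>"
          using s Yge by (simp add: Y_def)
        then have "s * \<epsilon> \<ge> (a + 1) / ((p - 1) * v0) + K / u0"
          using epos by (simp add: pos_divide_le_eq)
        then show ?thesis by linarith
      qed
      have Tpos: "(a + 1) / ((p - 1) * v0) > 0" using apos p v0pos by auto
      have pw2: "x powr (p - 1 - of_nat 1) = v / x"
      proof -
        have e1: "x powr (p - 1 - of_nat 1) = x powr (p - 1) / x powr 1"
          unfolding of_nat_1 by (rule powr_diff)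
        have e2: "x powr 1 = x" using xpos by simp
        show ?thesis by (simp only: e1 e2 v_def)
      qed
      have "W' s = (p - 1) * (v / x) * \<phi>'' s - a"
        unfolding W'_def x_def[symmetric] pw2 by (rule refl)
      note G0 = this
      have G1: "(p - 1) * (v / x) * \<phi>'' s \<ge> (p - 1) * (v / x) * (s * x * \<epsilon> - K)"
        using F p xpos vv0 v0pos by (intro mult_left_mono) auto
      have G2: "(p - 1) * (v / x) * (s * x * \<epsilon> - K) = (p - 1) * v * (s * \<epsilon> - K / x)"
        using xpos by (simp add: field_simps)
      have "K / x \<le> K / u0" using xu u0pos Kge by (simp add: divide_left_mono)
      hence G3: "(p - 1) * v * (s * \<epsilon> - K / x) \<ge> (p - 1) * v * (s * \<epsilon> - K / u0)"
        using p vv0 v0pos by (intro mult_left_mono) auto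
      have G4: "(p - 1) * v * (s * \<epsilon> - K / u0) \<ge> (p - 1) * v0 * (s * \<epsilon> - K / u0)"
        using p vv0 T Tpos by (intro mult_right_mono mult_left_mono) auto
      have G5: "(p - 1) * v0 * (s * \<epsilon> - K / u0) \<ge> (p - 1) * v0 * ((a + 1) / ((p - 1) * v0))"
        using p v0pos T by (intro mult_left_mono) auto
      have G6: "(p - 1) * v0 * ((a + 1) / ((p - 1) * v0)) = a + 1" using p v0pos by simp
      show ?thesis using G0 G1 G2 G3 G4 G5 G6 by linarith
    qed
    have evW: "eventually (\<lambda>y. W y \<ge> 0) at_top"
    proof (cases "\<exists>y1\<ge>Y. W y1 \<ge> 0")
      case True
      then obtain y1 where y1: "y1 \<ge> Y" "W y1 \<ge> 0" by auto
      have "W y \<ge> 0" if "y \<ge> y1" for y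
      proof (rule nodown[OF that, of W W'])
        fix s assume "y1 \<le> s" "s \<le> y"
        then have "s \<ge> Y" "s > 0" using y1 Yge by auto
        then show "DERIV W s :> W' s" "W s < 0 \<Longrightarrow> W' s > 0"
          using DW[of s] W'ge[of s] by auto
      qed (use y1 in auto)
      then show ?thesis unfolding eventually_at_top_linorder by blast
    next
      case False
      define y1 where "y1 = Y - W Y + 1"
      have WY: "W Y < 0" using False by auto
      have "W Y - Y \<le> W y1 - y1"
      proof (rule DERIV_nonneg_imp_nondecreasing[of Y y1 "\<lambda>s. W s - s"])
        show "Y \<le> y1" using WY by (simp add: y1_def)
        fix x assume x: "Y \<le> x" "x \<le> y1"
        then have "x > 0" using Yge by auto
        then have "DERIV (\<lambda>s. W s - s) x :> W' x - 1"
          using DERIV_diff[OF DW[of x] DERIV_ident] by simp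
        moreover have "W' x \<ge> 1" using W'ge x False by auto
        ultimately show "\<exists>y. DERIV (\<lambda>s. W s - s) x :> y \<and> y \<ge> 0" by auto
      qed
      then have "W y1 \<ge> 1" by (simp add: y1_def)
      moreover have "y1 \<ge> Y" using WY by (simp add: y1_def)
      ultimately show ?thesis using False by force
    qed
    moreover have "eventually (\<lambda>y::real. y > 0) at_top" by (rule eventually_gt_at_top)
    ultimately show ?thesis
    proof eventually_elim
      case (elim y)
      then have "\<phi>' y powr (p - 1) \<ge> a * y" by (simp add: W_def)
      then have "\<phi>' y powr (p - 1) / y \<ge> a" using elim by (simp add: pos_le_divide_eq)
      then show ?case using apos by simp
    qed
  qed
  have part2: "Liminf at_top (\<lambda>y. ereal ((\<phi>' y) powr (p - 1) / y)) \<ge> ereal c"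
  proof (subst le_Liminf_iff, intro allI impI)
    fix z :: ereal assume z: "z < ereal c"
    show "eventually (\<lambda>y. z < ereal (\<phi>' y powr (p - 1) / y)) at_top"
    proof (cases z)
      case (real b)
      then have "b < c" using z by simp
      from KEY[OF this] show ?thesis by eventually_elim (simp add: real)
    next
      case PInf then show ?thesis using z by simp
    next
      case MInf then show ?thesis by simp
    qed
  qed
  have part3: "\<exists>C\<^sub>1>0. \<forall>y\<ge>1. \<phi>' y \<ge> C\<^sub>1 * y powr (1 / (p - 1))"
  proof -
    have "c / 2 < c" using cpos by simp
    from KEY[OF this] obtain Y2 where Y2: "\<And>y. y \<ge> Y2 \<Longrightarrow> c / 2 < \<phi>' y powr (p - 1) / y"
      unfolding eventually_at_top_linorder by blast
    define Y3 where "Y3 = max Y2 1"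
    have big: "\<phi>' y \<ge> (c / 2) powr (1 / (p - 1)) * y powr (1 / (p - 1))" if y: "y \<ge> Y3" for y
    proof -
      have y0': "y > 0" "y \<ge> Y2" using y by (auto simp: Y3_def)
      have xpos: "\<phi>' y > 0" using pos y0' by auto
      have "c / 2 * y < \<phi>' y powr (p - 1)" using Y2[OF y0'(2)] y0' by (simp add: pos_less_divide_eq)
      then have "(c / 2 * y) powr (1 / (p - 1)) \<le> (\<phi>' y powr (p - 1)) powr (1 / (p - 1))"
        using cpos y0' p by (intro powr_mono2) auto
      also have "\<dots> = \<phi>' y" using xpos p by (simp add: powr_powr)
      finally have "(c / 2 * y) powr (1 / (p - 1)) \<le> \<phi>' y" .
      moreover have "(c / 2 * y) powr (1 / (p - 1)) = (c / 2) powr (1 / (p - 1)) * y powr (1 / (p - 1))"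
        by (rule powr_mult)
      ultimately show ?thesis by simp
    qed
    have "continuous_on {1..Y3} \<phi>'"
      using D2 by (meson DERIV_isCont atLeastAtMost_iff continuous_at_imp_continuous_on less_le_trans zero_less_one)
    then obtain z where z: "z \<in> {1..Y3}" "\<And>t. t \<in> {1..Y3} \<Longrightarrow> \<phi>' z \<le> \<phi>' t"
      using continuous_attains_inf[of "{1..Y3}" \<phi>'] by (auto simp: Y3_def)
    have zpos: "\<phi>' z > 0" using pos z(1) by auto
    define C1 where "C1 = min ((c / 2) powr (1 / (p - 1))) (\<phi>' z / Y3 powr (1 / (p - 1)))"
    have Y3pos: "Y3 > 0" by (simp add: Y3_def)
    have C1pos: "C1 > 0" using cpos zpos Y3pos by (simp add: C1_def)
    have "\<phi>' y \<ge> C1 * y powr (1 / (p - 1))" if y: "y \<ge> 1" for y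
    proof (cases "y \<ge> Y3")
      case True
      have "C1 * y powr (1 / (p - 1)) \<le> (c / 2) powr (1 / (p - 1)) * y powr (1 / (p - 1))"
        by (intro mult_right_mono) (auto simp: C1_def)
      then show ?thesis using big[OF True] by linarith
    next
      case False
      have yp: "y powr (1 / (p - 1)) \<le> Y3 powr (1 / (p - 1))"
        using False y p by (intro powr_mono2) auto
      have "C1 * y powr (1 / (p - 1)) \<le> (\<phi>' z / Y3 powr (1 / (p - 1))) * Y3 powr (1 / (p - 1))"
        using yp C1pos by (intro mult_mono) (auto simp: C1_def)
      also have "\<dots> = \<phi>' z" using Y3pos by simp
      also have "\<dots> \<le> \<phi>' y" using z(2)[of y] False y by auto
      finally show ?thesis .
    qed
    then show ?thesis using C1pos by blast
  qed
  show ?thesis using part1 part2 part3 by (simp add: c_def)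
qed

end
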